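(* Let $G$ be a connected graph and let $H$ be obtained from $G$ by a $Q$-switching with switching set $X$. If the neighborhood graph $G_X$ is a disjoint union of cycles, then $H$ is isomorphic to $G$.
   Context: Graphs are finite and simple. $Q$ is a $k\times k$ real orthogonal matrix with no integral rows. $H$ is obtained from $G$ by a $Q$-switching with switching set $X$ ($|X|=k$) if $H$ has the same vertex set $V$ and, after ordering vertices with $X$ first, $A_H=M^TA_GM$ with $M=\operatorname{diag}(Q,-I_a,I_b)$ block diagonal, $a+b=|V|-k$. The neighborhood graph $G_X$ has vertex set $X\cup N(X)$, where $N(X)$ is the set of vertices adjacent to some vertex of $X$, and edge set the edges of $G$ with at least one endpoint in $X$. *)

theory Defs
  imports "HOL-Analysis.Analysis" "HOL-Library.Disjoint_Sets"
begin

definition simple_graph :: "('v \<Rightarrow> 'v \<Rightarrow> bool) \<Rightarrow> bool" where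
  "simple_graph E \<longleftrightarrow> (\<forall>x y. E x y = E y x) \<and> (\<forall>x. \<not> E x x)"

definition connected_graph :: "('v \<Rightarrow> 'v \<Rightarrow> bool) \<Rightarrow> bool" where
  "connected_graph E \<longleftrightarrow> (\<forall>u v. (u, v) \<in> {(x, y). E x y}\<^sup>*)"

definition adj_mat :: "('v::finite \<Rightarrow> 'v \<Rightarrow> bool) \<Rightarrow> real^'v^'v" where
  "adj_mat E = (\<chi> i j. if E i j then 1 else 0)"

text \<open>H is obtained from G by a Q-switching with switching set X:
  A_H = M^T A_G M where, in the coordinates indexed by the vertices,
  M restricted to X x X is a real orthogonal matrix Q with no integral rows,
  M is zero between X and V - X, and M restricted to V - X is diagonal
  with entries -1 or 1 (i.e. diag(-I_a, I_b) after reordering).\<close>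
definition q_switching ::
  "('v::finite \<Rightarrow> 'v \<Rightarrow> bool) \<Rightarrow> 'v set \<Rightarrow> ('v \<Rightarrow> 'v \<Rightarrow> bool) \<Rightarrow> bool" where
  "q_switching G X H \<longleftrightarrow> simple_graph G \<and> simple_graph H \<and>
     (\<exists>M :: real^'v^'v.
        (\<forall>i j. (i \<in> X \<and> j \<notin> X) \<or> (i \<notin> X \<and> j \<in> X) \<longrightarrow> M $ i $ j = 0) \<and>
        (\<forall>i j. i \<notin> X \<and> j \<notin> X \<and> i \<noteq> j \<longrightarrow> M $ i $ j = 0) \<and>
        (\<forall>i. i \<notin> X \<longrightarrow> M $ i $ i = 1 \<or> M $ i $ i = -1) \<and>
        (\<forall>i\<in>X. \<forall>j\<in>X. (\<Sum>k\<in>X. M $ k $ i * M $ k $ j) = (if i = j then 1 else 0)) \<and>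
        (\<forall>i\<in>X. \<exists>j\<in>X. M $ i $ j \<notin> \<int>) \<and>
        adj_mat H = transpose M ** adj_mat G ** M)"

definition nbhd_vertices :: "('v \<Rightarrow> 'v \<Rightarrow> bool) \<Rightarrow> 'v set \<Rightarrow> 'v set" where
  "nbhd_vertices G X = X \<union> {v. \<exists>x\<in>X. G x v}"

definition nbhd_edges :: "('v \<Rightarrow> 'v \<Rightarrow> bool) \<Rightarrow> 'v set \<Rightarrow> 'v \<Rightarrow> 'v \<Rightarrow> bool" where
  "nbhd_edges G X u v \<longleftrightarrow> G u v \<and> (u \<in> X \<or> v \<in> X)"

definition is_cycle_on :: "'v set \<Rightarrow> ('v \<Rightarrow> 'v \<Rightarrow> bool) \<Rightarrow> bool" where
  "is_cycle_on C E \<longleftrightarrow> (\<exists>n f. n \<ge> 3 \<and> bij_betw f {0..<n} C \<and>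
     (\<forall>i<n. \<forall>j<n. E (f i) (f j) \<longleftrightarrow> (j = Suc i mod n \<or> i = Suc j mod n)))"

text \<open>The graph (V, E) (E only relating vertices of V) is a disjoint union of cycles.\<close>
definition disjoint_union_of_cycles :: "'v set \<Rightarrow> ('v \<Rightarrow> 'v \<Rightarrow> bool) \<Rightarrow> bool" where
  "disjoint_union_of_cycles V E \<longleftrightarrow> (\<exists>P. partition_on V P \<and>
     (\<forall>C\<in>P. is_cycle_on C E) \<and>
     (\<forall>C\<in>P. \<forall>D\<in>P. C \<noteq> D \<longrightarrow> (\<forall>x\<in>C. \<forall>y\<in>D. \<not> E x y)))"

definition graph_iso :: "('v \<Rightarrow> 'v \<Rightarrow> bool) \<Rightarrow> ('v \<Rightarrow> 'v \<Rightarrow> bool) \<Rightarrow> bool" where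
  "graph_iso G H \<longleftrightarrow> (\<exists>f. bij f \<and> (\<forall>u v. G u v \<longleftrightarrow> H (f u) (f v)))"

end

theory Submission
  imports Defs
begin



lemma mm_entry: "(A ** B) $ i $ j = (\<Sum>k\<in>UNIV. A $ i $ k * B $ k $ j)"
  by (simp add: matrix_matrix_mult_def)

lemma tr_entry: "transpose A $ i $ j = A $ j $ i"
  by (simp add: transpose_def)

lemma adj_entry: "adj_mat E $ i $ j = (if E i j then 1 else 0)"
  by (simp add: adj_mat_def)

lemma mm_add_r: "((A::real^'n^'m) + B) ** C = A ** C + B ** C"
  by (simp add: vec_eq_iff mm_entry algebra_simps sum.distrib)
lemma mm_diff_r: "((A::real^'n^'m) - B) ** C = A ** C - B ** C"
  by (simp add: vec_eq_iff mm_entry algebra_simps sum_subtractf)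
lemma mm_diff_l: "(C::real^'n^'m) ** (A - B) = C ** A - C ** B"
  by (simp add: vec_eq_iff mm_entry algebra_simps sum_subtractf)
lemma mm_add_l: "(C::real^'n^'m) ** (A + B) = C ** A + C ** B"
  by (simp add: vec_eq_iff mm_entry algebra_simps sum.distrib)

lemma sum_single:
  assumes "finite A" "i \<in> A" "\<And>k. k \<in> A \<Longrightarrow> k \<noteq> i \<Longrightarrow> f k = 0"
  shows "sum f A = f i"
proof -
  have "sum f A = f i + sum f (A - {i})" using assms by (simp add: sum.remove)
  also have "sum f (A - {i}) = 0" using assms by (intro sum.neutral) auto
  finally show ?thesis by simp
qed

locale qsw =
  fixes G H :: "'v::finite \<Rightarrow> 'v \<Rightarrow> bool" and X :: "'v set" and M :: "real^'v^'v"
  assumes sG: "simple_graph G" and sH: "simple_graph H"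
    and M1: "\<And>i j. (i \<in> X \<and> j \<notin> X) \<or> (i \<notin> X \<and> j \<in> X) \<Longrightarrow> M $ i $ j = 0"
    and M2: "\<And>i j. i \<notin> X \<Longrightarrow> j \<notin> X \<Longrightarrow> i \<noteq> j \<Longrightarrow> M $ i $ j = 0"
    and M3: "\<And>i. i \<notin> X \<Longrightarrow> M $ i $ i = 1 \<or> M $ i $ i = -1"
    and M4: "\<And>i j. i \<in> X \<Longrightarrow> j \<in> X \<Longrightarrow> (\<Sum>k\<in>X. M $ k $ i * M $ k $ j) = (if i = j then 1 else 0)"
    and AH: "adj_mat H = transpose M ** adj_mat G ** M"
begin

lemma colY: "j \<notin> X \<Longrightarrow> k \<noteq> j \<Longrightarrow> M $ k $ j = 0"
  using M1 M2 by (cases "k \<in> X") auto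

lemma rowY: "i \<notin> X \<Longrightarrow> k \<noteq> i \<Longrightarrow> M $ i $ k = 0"
  using M1 M2 by (cases "k \<in> X") auto

lemma dsq: "i \<notin> X \<Longrightarrow> M $ i $ i * M $ i $ i = 1"
  using M3[of i] by auto

lemma MtM: "transpose M ** M = mat 1"
proof -
  have "(\<Sum>k\<in>UNIV. M $ k $ i * M $ k $ j) = (if i = j then 1 else 0)" for i j
  proof (cases "i \<in> X")
    case iX: True
    show ?thesis
    proof (cases "j \<in> X")
      case True
      have "(\<Sum>k\<in>UNIV. M $ k $ i * M $ k $ j) = (\<Sum>k\<in>X. M $ k $ i * M $ k $ j)"
        by (rule sum.mono_neutral_right) (use iX M1 in auto)
      then show ?thesis using M4[OF iX True] by simp
    next
      case False
      have "(\<Sum>k\<in>UNIV. M $ k $ i * M $ k $ j) = 0"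
        by (rule sum.neutral) (use iX False M1 in auto)
      then show ?thesis using iX False by auto
    qed
  next
    case iY: False
    have "(\<Sum>k\<in>UNIV. M $ k $ i * M $ k $ j) = M $ i $ i * M $ i $ j"
      by (rule sum_single) (use iY colY in auto)
    then show ?thesis using iY dsq[OF iY] rowY[OF iY, of j] by auto
  qed
  then show ?thesis by (simp add: vec_eq_iff mm_entry tr_entry mat_def)
qed

lemma MMt: "M ** transpose M = mat 1"
  using MtM matrix_left_right_inverse by blast

lemma rconjY: "j \<notin> X \<Longrightarrow> (B ** M) $ i $ j = B $ i $ j * M $ j $ j"
  unfolding mm_entry by (rule sum_single) (use colY in auto)

lemma lconjY: "i \<notin> X \<Longrightarrow> (transpose M ** B) $ i $ j = M $ i $ i * B $ i $ j"
  unfolding mm_entry tr_entry by (rule sum_single) (use colY in auto)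

lemma conjYY: "i \<notin> X \<Longrightarrow> j \<notin> X \<Longrightarrow>
   (transpose M ** B ** M) $ i $ j = M $ i $ i * B $ i $ j * M $ j $ j"
  by (simp add: rconjY lconjY)

lemma HYY: assumes "i \<notin> X" "j \<notin> X" shows "H i j = G i j"
proof -
  have e: "adj_mat H $ i $ j = M $ i $ i * adj_mat G $ i $ j * M $ j $ j"
    using AH conjYY[OF assms] by simp
  show ?thesis
    using e M3[OF assms(1)] M3[OF assms(2)] by (auto simp: adj_entry split: if_splits)
qed

lemma HXY: assumes "x \<in> X" "y \<notin> X" "\<not> (\<exists>x'\<in>X. G x' y)" shows "\<not> H x y"
proof -
  have "(transpose M ** adj_mat G) $ x $ y = 0"
    unfolding mm_entry tr_entry
    by (rule sum.neutral) (use assms M1 in \<open>auto simp: adj_entry\<close>)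
  then have "adj_mat H $ x $ y = 0" by (simp add: AH rconjY[OF assms(2)])
  then show ?thesis by (simp add: adj_entry split: if_splits)
qed

abbreviation "GXm \<equiv> adj_mat (nbhd_edges G X)"
abbreviation "HXm \<equiv> adj_mat (nbhd_edges H X)"
abbreviation "GRm \<equiv> adj_mat (\<lambda>u v. G u v \<and> u \<notin> X \<and> v \<notin> X)"

lemma tGR0: "k \<in> X \<or> i \<in> X \<Longrightarrow> (transpose M ** GRm) $ i $ k = 0"
  unfolding mm_entry tr_entry
  by (rule sum.neutral) (use M1 in \<open>auto simp: adj_entry\<close>)

lemma conj_GR: "(transpose M ** GRm ** M) $ i $ j = (if i \<notin> X \<and> j \<notin> X then adj_mat H $ i $ j else 0)"
proof (cases "i \<notin> X \<and> j \<notin> X")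
  case True
  then show ?thesis using conjYY[of i j GRm] conjYY[of i j "adj_mat G"] AH
    by (simp add: adj_entry)
next
  case False
  show ?thesis
  proof (cases "j \<in> X")
    case True
    have "(transpose M ** GRm ** M) $ i $ j = 0"
      unfolding mm_entry[of "transpose M ** GRm"]
      by (rule sum.neutral) (use True M1 tGR0 in \<open>auto\<close>)
    then show ?thesis using True by simp
  next
    case jY: False
    then have iX: "i \<in> X" using False by auto
    show ?thesis using rconjY[OF jY, of "transpose M ** GRm" i] tGR0[of j i] iX by simp
  qed
qed

lemma G_split: "adj_mat G = GXm + GRm"
  by (auto simp: vec_eq_iff adj_entry nbhd_edges_def)

lemma conj_GX: "transpose M ** GXm ** M = HXm"
proof -
  have "transpose M ** GXm ** M = adj_mat H - transpose M ** GRm ** M"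
    using AH G_split by (simp add: mm_add_l mm_add_r)
  also have "\<dots> = HXm"
    by (auto simp: vec_eq_iff conj_GR adj_entry nbhd_edges_def)
  finally show ?thesis .
qed

end



fun Tm :: "nat \<Rightarrow> real^'n^'n \<Rightarrow> real^'n^'n" where
  "Tm 0 A = mat 2"
| "Tm (Suc 0) A = A"
| "Tm (Suc (Suc k)) A = Tm (Suc k) A ** A - Tm k A"

lemma Tm_conj:
  fixes M :: "real^'n^'n"
  assumes "transpose M ** M = mat 1" "M ** transpose M = mat 1"
  shows "Tm k (transpose M ** A ** M) = transpose M ** Tm k A ** M"
proof (induction k A rule: Tm.induct)
  case (1 A)
  have m2: "mat 2 = (mat 1 + mat 1 :: real^'n^'n)" by (simp add: vec_eq_iff mat_def)
  have "transpose M ** (mat 1 + mat 1) ** M = (mat 1 + mat 1 :: real^'n^'n)"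
    by (simp only: mm_add_l mm_add_r matrix_mul_rid assms(1))
  then show ?case by (simp only: m2 Tm.simps)
next
  case (2 A)
  then show ?case by simp
next
  case (3 k A)
  have "Tm (Suc k) (transpose M ** A ** M) ** (transpose M ** A ** M)
     = transpose M ** (Tm (Suc k) A ** A) ** M"
  proof -
    have "Tm (Suc k) (transpose M ** A ** M) ** (transpose M ** A ** M)
        = transpose M ** Tm (Suc k) A ** (M ** transpose M) ** A ** M"
      using 3 by (simp add: matrix_mul_assoc)
    also have "\<dots> = transpose M ** (Tm (Suc k) A ** A) ** M"
      using assms(2) by (simp add: matrix_mul_assoc)
    finally show ?thesis .
  qed
  then show ?case using 3 by (simp add: mm_diff_l mm_diff_r)
qed

definition two_reg :: "('v \<Rightarrow> 'v \<Rightarrow> bool) \<Rightarrow> 'v set \<Rightarrow> bool" where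
  "two_reg E S \<longleftrightarrow> (\<forall>u v. E u v \<longrightarrow> u \<in> S \<and> v \<in> S) \<and> (\<forall>u v. E u v = E v u) \<and>
     (\<forall>u. \<not> E u u) \<and> (\<forall>u\<in>S. \<exists>a b. a \<noteq> b \<and> {v. E u v} = {a, b})"

definition other :: "('v \<Rightarrow> 'v \<Rightarrow> bool) \<Rightarrow> 'v \<Rightarrow> 'v \<Rightarrow> 'v" where
  "other E a p = (THE q. E a q \<and> q \<noteq> p)"

lemma other:
  assumes "two_reg E S" "E a p"
  shows "E a (other E a p)" "other E a p \<noteq> p" "{v. E a v} = {p, other E a p}"
proof -
  have "a \<in> S" using assms unfolding two_reg_def by blast
  then obtain x y where xy: "x \<noteq> y" "{v. E a v} = {x, y}" using assms unfolding two_reg_def by blast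
  obtain q where q: "q \<noteq> p" "{v. E a v} = {p, q}"
    using xy assms(2) by (metis doubleton_eq_iff insert_commute mem_Collect_eq insertE singletonD)
  have th: "other E a p = q" unfolding other_def
    by (rule the_equality) (use q in \<open>auto simp: set_eq_iff\<close>)
  show "E a (other E a p)" "other E a p \<noteq> p" "{v. E a v} = {p, other E a p}"
    using q th by (auto simp: set_eq_iff)
qed

lemma two_regD:
  assumes "two_reg E S"
  shows "E u v \<Longrightarrow> u \<in> S" "E u v \<Longrightarrow> v \<in> S" "E u v = E v u" "\<not> E u u"
  using assms unfolding two_reg_def by blast+

fun walk :: "('v \<Rightarrow> 'v \<Rightarrow> bool) \<Rightarrow> 'v \<Rightarrow> 'v \<Rightarrow> nat \<Rightarrow> 'v" where
  "walk E v n 0 = v"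
| "walk E v n (Suc 0) = n"
| "walk E v n (Suc (Suc k)) = other E (walk E v n (Suc k)) (walk E v n k)"

lemma walk_step:
  assumes "two_reg E S" "E v n"
  shows "E (walk E v n k) (walk E v n (Suc k))"
proof (induction k rule: nat_less_induct)
  case (1 k)
  show ?case
  proof (cases k)
    case 0 then show ?thesis using assms by simp
  next
    case (Suc j)
    have "E (walk E v n (Suc j)) (walk E v n j)"
      using 1 Suc two_regD(3)[OF assms(1)] by auto
    then show ?thesis using Suc other(1)[OF assms(1)] by simp
  qed
qed

lemma walk_nbrs:
  assumes "two_reg E S" "E v n"
  shows "{u. E (walk E v n (Suc k)) u} = {walk E v n k, walk E v n (Suc (Suc k))}"
    "walk E v n (Suc (Suc k)) \<noteq> walk E v n k"
proof -
  have "E (walk E v n (Suc k)) (walk E v n k)"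
    using walk_step[OF assms, of k] two_regD(3)[OF assms(1)] by auto
  then show "{u. E (walk E v n (Suc k)) u} = {walk E v n k, walk E v n (Suc (Suc k))}"
    "walk E v n (Suc (Suc k)) \<noteq> walk E v n k"
    using other[OF assms(1)] by auto
qed

lemma mat_entry: "mat c $ i $ j = (if i = j then c else 0)"
  by (simp add: mat_def)

lemma row_adj:
  assumes "finite (UNIV :: 'v set)"
  shows "(\<Sum>w\<in>(UNIV::'v set). (of_bool (a = w) + of_bool (b = w)) * (if E w u then 1 else 0))
     = (if E a u then 1 else 0) + (if E b u then (1::real) else 0)"
proof -
  have d: "(\<Sum>w\<in>(UNIV::'v set). of_bool (c = w) * (if E w u then 1 else 0)) = (if E c u then (1::real) else 0)" for c
    by (subst sum_single[of UNIV c]) (use assms in auto)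
  show ?thesis by (simp add: distrib_right sum.distrib d)
qed

lemma Tm_walk:
  fixes E :: "'v::finite \<Rightarrow> 'v \<Rightarrow> bool"
  assumes "two_reg E S" "{u. E v u} = {n1, n2}" "n1 \<noteq> n2"
  shows "Tm k (adj_mat E) $ v $ u = of_bool (walk E v n1 k = u) + of_bool (walk E v n2 k = u)"
proof (induction k arbitrary: u rule: nat_less_induct)
  case (1 k)
  have e1: "E v n1" "E v n2" using assms(2) by auto
  have nb: "(if E (walk E v n (Suc j)) u then 1 else 0::real) =
      of_bool (walk E v n j = u) + of_bool (walk E v n (Suc (Suc j)) = u)" if "E v n" for n j
  proof -
    have s: "{u. E (walk E v n (Suc j)) u} = {walk E v n j, walk E v n (Suc (Suc j))}"
      "walk E v n (Suc (Suc j)) \<noteq> walk E v n j"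
      using walk_nbrs[OF assms(1) that] by auto
    have "E (walk E v n (Suc j)) u \<longleftrightarrow> u = walk E v n j \<or> u = walk E v n (Suc (Suc j))"
      using s(1) by (auto simp: set_eq_iff)
    then show ?thesis using s(2) by auto
  qed
  show ?case
  proof (cases k)
    case 0 then show ?thesis by (simp add: mat_entry)
  next
    case (Suc j)
    show ?thesis
    proof (cases j)
      case 0
      have "E v u \<longleftrightarrow> u = n1 \<or> u = n2" using assms(2) by (auto simp: set_eq_iff)
      then show ?thesis using Suc 0 assms(3) by (auto simp: adj_entry)
    next
      case (Suc i)
      have "Tm k (adj_mat E) $ v $ u = (Tm (Suc i) (adj_mat E) ** adj_mat E) $ v $ u - Tm i (adj_mat E) $ v $ u"
        using Suc \<open>k = Suc j\<close> by simp
      also have "(Tm (Suc i) (adj_mat E) ** adj_mat E) $ v $ u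
          = (if E (walk E v n1 (Suc i)) u then 1 else 0) + (if E (walk E v n2 (Suc i)) u then 1 else 0)"
        unfolding mm_entry adj_entry using 1 Suc \<open>k = Suc j\<close>
        by (simp add: row_adj)
      finally show ?thesis using nb[OF e1(1)] nb[OF e1(2)] 1 Suc \<open>k = Suc j\<close> by simp
    qed
  qed
qed




definition cyc_lab :: "('v \<Rightarrow> 'v \<Rightarrow> bool) \<Rightarrow> nat \<Rightarrow> (int \<Rightarrow> 'v) \<Rightarrow> bool" where
  "cyc_lab E m c \<longleftrightarrow> m \<ge> 3 \<and> (\<forall>i j. c i = c j \<longleftrightarrow> i mod int m = j mod int m) \<and>
     (\<forall>i. {u. E (c i) u} = {c (i + 1), c (i - 1)})"

lemma cyc_lab_distinct:
  assumes "cyc_lab E m c" shows "c (i + 1) \<noteq> c (i - 1)"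
proof -
  have m: "int m \<ge> 3" using assms unfolding cyc_lab_def by auto
  have "(i + 1) mod int m \<noteq> (i - 1) mod int m"
  proof
    assume "(i + 1) mod int m = (i - 1) mod int m"
    then have "int m dvd (i + 1) - (i - 1)" by (simp add: mod_eq_dvd_iff)
    then have "int m dvd 2" by simp
    then show False using m by (auto dest: zdvd_imp_le)
  qed
  then show ?thesis using assms unfolding cyc_lab_def by blast
qed

lemma cyc_lab_walk:
  assumes tr: "two_reg E S" and cl: "cyc_lab E m c"
  shows "walk E (c a) (c (a + 1)) k = c (a + int k) \<and> walk E (c a) (c (a - 1)) k = c (a - int k)"
proof (induction k rule: nat_less_induct)
  case (1 k)
  have nb: "{u. E (c i) u} = {c (i + 1), c (i - 1)}" for i using cl unfolding cyc_lab_def by blast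
  have oth1: "other E (c i) (c (i - 1)) = c (i + 1)" for i
  proof -
    have "E (c i) (c (i - 1))" using nb[of i] by auto
    from other[OF tr this] nb[of i] cyc_lab_distinct[OF cl, of i]
    show ?thesis by (auto simp: doubleton_eq_iff)
  qed
  have oth2: "other E (c i) (c (i + 1)) = c (i - 1)" for i
  proof -
    have "E (c i) (c (i + 1))" using nb[of i] by auto
    from other[OF tr this] nb[of i] cyc_lab_distinct[OF cl, of i]
    show ?thesis by (auto simp: doubleton_eq_iff)
  qed
  show ?case
  proof (cases k)
    case 0 then show ?thesis by simp
  next
    case (Suc j)
    show ?thesis
    proof (cases j)
      case 0 then show ?thesis using Suc by simp
    next
      case (Suc i)
      have ih: "walk E (c a) (c (a + 1)) (Suc i) = c (a + int (Suc i))"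
               "walk E (c a) (c (a + 1)) i = c (a + int i)"
               "walk E (c a) (c (a - 1)) (Suc i) = c (a - int (Suc i))"
               "walk E (c a) (c (a - 1)) i = c (a - int i)"
        using 1 Suc \<open>k = Suc j\<close> by auto
      have e1: "a + int i = a + int (Suc i) - 1" "a + int (Suc (Suc i)) = a + int (Suc i) + 1"
        by simp_all
      have e2: "a - int i = a - int (Suc i) + 1" "a - int (Suc (Suc i)) = a - int (Suc i) - 1"
        by simp_all
      have "walk E (c a) (c (a + 1)) k = c (a + int k)"
        using Suc \<open>k = Suc j\<close> ih(1,2) oth1[of "a + int (Suc i)"] by (simp only: walk.simps e1)
      moreover have "walk E (c a) (c (a - 1)) k = c (a - int k)"
        using Suc \<open>k = Suc j\<close> ih(3,4) oth2[of "a - int (Suc i)"] by (simp only: walk.simps e2)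
      ultimately show ?thesis by blast
    qed
  qed
qed

lemma cyc_lab_Tm:
  fixes E :: "'v::finite \<Rightarrow> 'v \<Rightarrow> bool"
  assumes tr: "two_reg E S" and cl: "cyc_lab E m c"
  shows "Tm k (adj_mat E) $ c a $ u = of_bool (c (a + int k) = u) + of_bool (c (a - int k) = u)"
proof -
  have nb: "{u. E (c a) u} = {c (a + 1), c (a - 1)}" using cl unfolding cyc_lab_def by blast
  show ?thesis
    using Tm_walk[OF tr nb cyc_lab_distinct[OF cl]] cyc_lab_walk[OF tr cl] by simp
qed




lemma modfacts:
  fixes i :: int and M :: int
  assumes "M > 0"
  shows "(i mod M + M + 1) mod M = (i + 1) mod M" "(i mod M + M - 1) mod M = (i - 1) mod M"
proof -
  have "(i mod M + M + 1) mod M = (i mod M + 1) mod M"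
    by (metis add.commute add.left_commute mod_add_self2)
  also have "\<dots> = (i + 1) mod M" by (simp add: mod_add_left_eq)
  finally show "(i mod M + M + 1) mod M = (i + 1) mod M" .
  have "(i mod M + M - 1) mod M = ((i mod M - 1) + M) mod M" by (simp add: algebra_simps)
  also have "\<dots> = (i mod M - 1) mod M" by simp
  also have "\<dots> = (i - 1) mod M" by (simp add: mod_diff_left_eq)
  finally show "(i mod M + M - 1) mod M = (i - 1) mod M" .
qed

lemma walk_cycle:
  fixes E :: "'v \<Rightarrow> 'v \<Rightarrow> bool"
  assumes tr: "two_reg E S" and bn: "E b n" and m3: "m \<ge> 3"
    and ret: "\<And>k. 0 < k \<Longrightarrow> k < m \<Longrightarrow> walk E b n k \<noteq> b" and bk: "walk E b n m = b"
  shows "cyc_lab E m (\<lambda>i. walk E b n (nat (i mod int m)))"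
proof -
  define h where "h = walk E b n"
  have nbS: "{u. E (h (Suc k)) u} = {h k, h (Suc (Suc k))}" "h (Suc (Suc k)) \<noteq> h k" for k
    using walk_nbrs[OF tr bn] unfolding h_def by auto
  have stp: "h (Suc k) \<noteq> h k" for k
    using walk_step[OF tr bn, of k] two_regD(4)[OF tr] unfolding h_def by metis
  have opp0: "\<forall>i. h i = h (i + d) \<longrightarrow> h (i + 1) = h (i + d - 1) \<longrightarrow> 1 \<le> d \<longrightarrow> False" for d
  proof (induction d rule: less_induct)
    case (less d)
    show ?case
    proof (intro allI impI)
    fix i assume a: "h i = h (i + d)" "h (i + 1) = h (i + d - 1)" "1 \<le> d"
    show False
    proof (cases "d \<le> 2")
      case True
      then have "d = 1 \<or> d = 2" using a(3) by auto
      then show False using a stp[of i] nbS(2)[of i] by (auto simp: numeral_2_eq_2)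
    next
      case False
      have e1: "Suc (i + d - 2) = i + d - 1" "Suc (i + d - 1) = i + d" using False by auto
      have s1: "{u. E (h (i + d - 1)) u} = {h (i + d - 2), h (i + d)}"
        using nbS(1)[of "i + d - 2"] by (simp only: e1)
      have s2: "{u. E (h (i + 1)) u} = {h i, h (i + 2)}"
        using nbS(1)[of i] by (simp add: numeral_2_eq_2)
      have d1: "h (i + 2) \<noteq> h i" using nbS(2)[of i] by (simp add: numeral_2_eq_2)
      have d2: "h (i + d - 2) \<noteq> h (i + d)" using nbS(2)[of "i + d - 2"] by (simp only: e1) metis
      have h2: "h (i + 2) = h (i + d - 2)"
        using s1 s2 a(1,2) d1 d2 by (auto simp: doubleton_eq_iff)
      have IH: "\<forall>i. h i = h (i + (d - 2)) \<longrightarrow> h (i + 1) = h (i + (d - 2) - 1) \<longrightarrow> 1 \<le> d - 2 \<longrightarrow> False"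
        using less[of "d - 2"] False by simp
      have eqs: "i + 1 + (d - 2) = i + d - 1" "i + 1 + (d - 2) - 1 = i + d - 2" "i + 1 + 1 = i + 2" "i + d - 1 - 1 = i + d - 2"
        using False by auto
      have A: "h (i + 1) = h (i + 1 + (d - 2))" using a(2) by (simp only: eqs)
      have B: "h (i + 1 + 1) = h (i + 1 + (d - 2) - 1)" using h2 by (simp only: eqs)
      have C: "1 \<le> d - 2" using False by simp
      show False using IH A B C by blast
    qed
    qed
  qed
  have opp: "h i = h (i + d) \<Longrightarrow> h (i + 1) = h (i + d - 1) \<Longrightarrow> 1 \<le> d \<Longrightarrow> False" for i d
    using opp0 by blast
  have binj: "\<And>j. i < j \<Longrightarrow> h i = h j \<Longrightarrow> h 0 = h (j - i)" for i
  proof (induction i)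
    case 0 then show ?case by simp
  next
    case (Suc i)
    obtain j' where j': "j = Suc j'" using Suc.prems by (cases j) auto
    have s1: "{u. E (h (Suc i)) u} = {h i, h (Suc (Suc i))}" by (rule nbS(1))
    have s2: "{u. E (h j) u} = {h j', h (Suc (Suc j'))}" using nbS(1)[of j'] j' by simp
    show ?case
    proof (cases "h i = h j'")
      case True
      then show ?thesis using Suc.IH[of j'] Suc.prems j' by simp
    next
      case False
      then have "h (Suc (Suc i)) = h j'" using s1 s2 Suc.prems(2) by (auto simp: doubleton_eq_iff)
      then show ?thesis
        using opp[of "Suc i" "j - Suc i"] Suc.prems j' by simp (metis Suc_leI zero_less_diff)
    qed
  qed
  have injm: "i < m \<Longrightarrow> j < m \<Longrightarrow> h i = h j \<Longrightarrow> i = j" for i j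
  proof (rule ccontr)
    assume a: "i < m" "j < m" "h i = h j" "i \<noteq> j"
    show False
    proof (cases "i < j")
      case True
      then show False using binj[of i j] a ret[of "j - i"] unfolding h_def by (simp; linarith)
    next
      case False
      then show False using binj[of j i] a ret[of "i - j"] unfolding h_def by (simp; linarith)
    qed
  qed
  have h0: "h 0 = b" "h m = b" "h 1 = n" using bk unfolding h_def by simp_all
  have hm1: "h (Suc m) = h 1"
  proof -
    have s: "{u. E (h m) u} = {h (m - 1), h (Suc m)}"
      using nbS(1)[of "m - 1"] m3 by simp
    have "E b n" by (rule bn)
    then have "h 1 \<in> {h (m - 1), h (Suc m)}" using s h0 by auto
    moreover have "h 1 \<noteq> h (m - 1)" using injm[of 1 "m - 1"] m3 by auto
    ultimately show ?thesis by auto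
  qed
  have per: "h (k + m) = h k \<and> h (Suc k + m) = h (Suc k)" for k
  proof (induction k)
    case 0 then show ?case using h0 hm1 by simp
  next
    case (Suc k)
    have "h (Suc (Suc k) + m) = other E (h (Suc k + m)) (h (k + m))"
      unfolding h_def by (simp add: add.commute)
    also have "\<dots> = h (Suc (Suc k))" using Suc unfolding h_def by simp
    finally show ?case using Suc by simp
  qed
  have perq: "h (r + q * m) = h r" for r q
  proof (induction q)
    case (Suc q)
    have "r + Suc q * m = (r + q * m) + m" by simp
    then show ?case using per[of "r + q * m"] Suc by (simp only:)
  qed simp
  have hmod: "h k = h (k mod m)" for k
    using perq[of "k mod m" "k div m"] by (simp add: add.commute)
  define c where "c i = h (nat (i mod int m))" for i
  have m0: "int m > 0" using m3 by simp
  have ceq: "int k mod int m = i mod int m \<Longrightarrow> c i = h k" for i k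
  proof -
    assume a: "int k mod int m = i mod int m"
    have "nat (i mod int m) = k mod m" using a by (metis nat_int of_nat_mod)
    then show ?thesis unfolding c_def using hmod[of k] by simp
  qed
  have inj: "c i = c j \<longleftrightarrow> i mod int m = j mod int m" for i j
  proof
    assume "c i = c j"
    then have "nat (i mod int m) = nat (j mod int m)"
      using injm[of "nat (i mod int m)" "nat (j mod int m)"] m0 unfolding c_def
      by (simp add: nat_less_iff)
    then show "i mod int m = j mod int m" using m0 by (metis eq_nat_nat_iff pos_mod_sign of_nat_0_less_iff)
  qed (simp add: c_def)
  have nb: "{u. E (c i) u} = {c (i + 1), c (i - 1)}" for i
  proof -
    define p where "p = nat (i mod int m)"
    have ip: "int p = i mod int m" unfolding p_def using m0 by simp
    have "c i = h (Suc (p + m - 1))" unfolding c_def p_def[symmetric] using per[of p] m3 by simp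
    then have s: "{u. E (c i) u} = {h (p + m - 1), h (Suc (Suc (p + m - 1)))}" using nbS(1) by simp
    have "c (i + 1) = h (Suc (Suc (p + m - 1)))"
      by (rule ceq) (use m3 ip modfacts(1)[OF m0, of i] in \<open>simp add: of_nat_diff algebra_simps\<close>)
    moreover have "c (i - 1) = h (p + m - 1)"
      by (rule ceq) (use m3 ip modfacts(2)[OF m0, of i] in \<open>simp add: of_nat_diff algebra_simps\<close>)
    ultimately show ?thesis using s by auto
  qed
  show ?thesis unfolding cyc_lab_def using m3 inj nb unfolding c_def h_def by blast
qed




lemma cycle_lab_exists:
  assumes cyc: "is_cycle_on C E" and cl: "\<And>u v. E u v \<Longrightarrow> u \<in> C \<Longrightarrow> v \<in> C"
    and bC: "b \<in> C"
  shows "\<exists>n c. cyc_lab E n c \<and> c 0 = b \<and> (\<forall>i. c i \<in> C) \<and> (\<forall>v\<in>C. \<exists>i. c i = v)"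
proof -
  obtain n f where n3: "n \<ge> 3" and bij: "bij_betw f {0..<n} C"
    and adj: "\<And>i j. i < n \<Longrightarrow> j < n \<Longrightarrow> E (f i) (f j) \<longleftrightarrow> (j = Suc i mod n \<or> i = Suc j mod n)"
    using cyc unfolding is_cycle_on_def by blast
  obtain s where s: "s < n" "f s = b" using bij bC by (metis atLeastLessThan_iff bij_betw_iff_bijections)
  have n0: "int n > 0" using n3 by simp
  define P where "P i = nat ((i + int s) mod int n)" for i
  define c where "c i = f (P i)" for i
  have Pint: "int (P i) = (i + int s) mod int n" for i unfolding P_def using n0 by simp
  have Pn: "P i < n" for i using Pint[of i] n0
    by (metis of_nat_less_iff pos_mod_bound)
  have Psuc: "P (i + 1) = Suc (P i) mod n" for i
  proof -
    have "int (Suc (P i) mod n) = (int (P i) + 1) mod int n" by (simp add: of_nat_mod add.commute)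
    also have "\<dots> = ((i + int s) mod int n + 1) mod int n" by (simp add: Pint)
    also have "\<dots> = (i + 1 + int s) mod int n" by (simp add: mod_add_right_eq add.commute add.left_commute)
    finally show ?thesis using Pint[of "i + 1"] by linarith
  qed
  have Ppred: "P i = Suc (P (i - 1)) mod n" for i using Psuc[of "i - 1"] by simp
  have finj: "x < n \<Longrightarrow> y < n \<Longrightarrow> f x = f y \<longleftrightarrow> x = y" for x y
    using bij unfolding bij_betw_def inj_on_def by auto
  have sucinj: "x < n \<Longrightarrow> y < n \<Longrightarrow> Suc x mod n = Suc y mod n \<Longrightarrow> x = y" for x y
    by (auto simp: mod_Suc split: if_splits)
  have inj: "c i = c j \<longleftrightarrow> i mod int n = j mod int n" for i j
  proof -
    have "c i = c j \<longleftrightarrow> P i = P j" unfolding c_def using finj Pn by blast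
    also have "\<dots> \<longleftrightarrow> (i + int s) mod int n = (j + int s) mod int n"
      using Pint[of i] Pint[of j] by (metis of_nat_eq_iff)
    also have "\<dots> \<longleftrightarrow> i mod int n = j mod int n"
      by (simp add: mod_eq_dvd_iff)
    finally show ?thesis .
  qed
  have cC: "c i \<in> C" for i unfolding c_def using bij Pn by (auto simp: bij_betw_def)
  have nb: "{u. E (c i) u} = {c (i + 1), c (i - 1)}" for i
  proof (rule set_eqI, rule iffI)
    fix u assume "u \<in> {u. E (c i) u}"
    then have e: "E (c i) u" by simp
    then have "u \<in> C" using cl cC by blast
    then obtain q where q: "q < n" "u = f q" using bij
      by (metis atLeastLessThan_iff bij_betw_iff_bijections)
    have "q = Suc (P i) mod n \<or> P i = Suc q mod n" using adj[OF Pn q(1)] e q unfolding c_def by simp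
    then have "q = P (i + 1) \<or> q = P (i - 1)"
      using Psuc Ppred sucinj[OF q(1) Pn] by metis
    then show "u \<in> {c (i + 1), c (i - 1)}" using q unfolding c_def by auto
  next
    fix u assume "u \<in> {c (i + 1), c (i - 1)}"
    then have "u = f (Suc (P i) mod n) \<or> u = f (P (i - 1))" unfolding c_def using Psuc by auto
    then show "u \<in> {u. E (c i) u}"
    proof
      assume "u = f (Suc (P i) mod n)"
      then show ?thesis using adj[OF Pn, of "Suc (P i) mod n"] n0 unfolding c_def by simp
    next
      assume "u = f (P (i - 1))"
      then show ?thesis using adj[OF Pn Pn, of i "i - 1"] Ppred[of i] unfolding c_def by simp
    qed
  qed
  have c0: "c 0 = b" unfolding c_def P_def using s by simp
  have onto: "\<forall>v\<in>C. \<exists>i. c i = v"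
  proof
    fix v assume "v \<in> C"
    then obtain q where q: "q < n" "f q = v" using bij
      by (metis atLeastLessThan_iff bij_betw_iff_bijections)
    have "P (int q - int s) = q" unfolding P_def using q by simp
    then show "\<exists>i. c i = v" using q unfolding c_def by metis
  qed
  show ?thesis using n3 inj nb c0 cC onto unfolding cyc_lab_def by blast
qed




lemma mv_entry: "(A *v x) $ i = (\<Sum>j\<in>UNIV. A $ i $ j * x $ j)"
  by (simp add: matrix_vector_mult_def)

lemma inner_sum: "(x::real^'n) \<bullet> y = (\<Sum>i\<in>UNIV. x $ i * y $ i)"
  by (simp add: inner_vec_def)

lemma qform_conj:
  fixes M B :: "real^'n^'n"
  shows "z \<bullet> ((transpose M ** B ** M) *v z) = (M *v z) \<bullet> (B *v (M *v z))"
proof -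
  have "(transpose M ** B ** M) *v z = transpose M *v (B *v (M *v z))"
    by (simp only: matrix_vector_mul_assoc matrix_mul_assoc)
  then show ?thesis
    by (metis dot_lmul_matrix vector_transpose_matrix)
qed

lemma frob_conj:
  fixes M A :: "real^'n^'n"
  assumes "M ** transpose M = mat 1"
  shows "trace (transpose (transpose M ** A ** M) ** (transpose M ** A ** M)) = trace (transpose A ** A)"
proof -
  have "transpose (transpose M ** A ** M) ** (transpose M ** A ** M)
      = transpose M ** (transpose A ** (M ** transpose M) ** A) ** M"
    by (simp add: matrix_transpose_mul matrix_mul_assoc)
  also have "\<dots> = transpose M ** (transpose A ** A) ** M" using assms by simp
  finally have e: "transpose (transpose M ** A ** M) ** (transpose M ** A ** M) = transpose M ** (transpose A ** A) ** M" .
  have "trace (transpose M ** (transpose A ** A) ** M) = trace (M ** (transpose M ** (transpose A ** A)))"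
    by (rule trace_mul_sym)
  also have "\<dots> = trace (transpose A ** A)" using assms by (simp add: matrix_mul_assoc)
  finally show ?thesis using e by simp
qed

lemma trace_tt: "trace (transpose (B::real^'n^'n) ** B) = (\<Sum>u\<in>UNIV. \<Sum>v\<in>UNIV. (B $ u $ v)^2)"
  unfolding trace_def mm_entry tr_entry by (subst sum.swap) (simp add: power2_eq_square)

context qsw begin

abbreviation "S \<equiv> nbhd_vertices G X"
abbreviation "EG \<equiv> nbhd_edges G X"
abbreviation "EH \<equiv> nbhd_edges H X"

lemma Gsym: "G u v = G v u" and Girr: "\<not> G u u"
  using sG unfolding simple_graph_def by auto
lemma Hsym: "H u v = H v u" and Hirr: "\<not> H u u"
  using sH unfolding simple_graph_def by auto

lemma XS: "X \<subseteq> S" unfolding nbhd_vertices_def by auto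

lemma EG_S: "EG u v \<Longrightarrow> u \<in> S \<and> v \<in> S"
  unfolding nbhd_edges_def nbhd_vertices_def using Gsym by blast

lemma EH_S: assumes "EH u v" shows "u \<in> S \<and> v \<in> S"
proof -
  have "v \<in> S" if "H u v" "u \<in> X" for u v
  proof (cases "v \<in> X")
    case False
    then have "\<exists>x'\<in>X. G x' v" using HXY[OF that(2) False] that(1) by blast
    then show ?thesis unfolding nbhd_vertices_def by blast
  qed (auto simp: nbhd_vertices_def)
  then show ?thesis using assms XS Hsym unfolding nbhd_edges_def by blast
qed

lemma EG_sym: "EG u v = EG v u" and EH_sym: "EH u v = EH v u"
  unfolding nbhd_edges_def using Gsym Hsym by auto
lemma EG_irr: "\<not> EG u u" and EH_irr: "\<not> EH u u"
  unfolding nbhd_edges_def using Girr Hirr by auto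

lemma sum_if_card: "(\<Sum>v\<in>(UNIV::'v set). if P v then 1 else (0::real)) = real (card {v. P v})"
  by (simp add: sum.If_cases)

lemma trH:
  assumes trG: "two_reg EG S"
  shows "two_reg EH S"
proof -
  define z :: "real^'v" where "z = (\<chi> i. if i \<in> S then 1 else 0)"
  define w where "w = M *v z"
  have z_e: "z $ i = (if i \<in> S then 1 else 0)" for i unfolding z_def by simp
  have degG: "(\<Sum>v\<in>UNIV. GXm $ u $ v) = (if u \<in> S then 2 else 0)" for u
  proof (cases "u \<in> S")
    case True
    then obtain a b where ab: "a \<noteq> b" "{v. EG u v} = {a, b}" using trG unfolding two_reg_def by blast
    have "(\<Sum>v\<in>UNIV. GXm $ u $ v) = real (card {v. EG u v})"
      by (simp add: adj_entry sum_if_card)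
    then show ?thesis using ab True by simp
  next
    case False
    then have "{v. EG u v} = {}" using EG_S by blast
    then show ?thesis using False by (simp add: adj_entry sum_if_card)
  qed
  have symG: "GXm $ u $ v = GXm $ v $ u" for u v using EG_sym by (simp add: adj_entry)
  have sq01: "(adj_mat E $ u $ v)^2 = adj_mat E $ u $ v" for E u v by (simp add: adj_entry)
  have s2: "(\<Sum>u\<in>UNIV. \<Sum>v\<in>UNIV. (GXm $ u $ v)^2) = 2 * real (card S)"
    by (simp add: sq01 degG sum.If_cases)
  have s1: "(\<Sum>u\<in>UNIV. \<Sum>v\<in>UNIV. (HXm $ u $ v)^2) = 2 * real (card S)"
    using frob_conj[OF MMt, of GXm] conj_GX s2 by (simp add: trace_tt)
  have s3: "z \<bullet> (HXm *v z) = 2 * real (card S)"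
  proof -
    have "z $ u * (HXm $ u $ v * z $ v) = (HXm $ u $ v)^2" for u v
      using EH_S[of u v] by (auto simp: z_e adj_entry)
    then have "z \<bullet> (HXm *v z) = (\<Sum>u\<in>UNIV. \<Sum>v\<in>UNIV. (HXm $ u $ v)^2)"
      by (simp add: inner_sum mv_entry sum_distrib_left)
    then show ?thesis using s1 by simp
  qed
  have s4: "w \<bullet> (GXm *v w) = 2 * real (card S)"
    using qform_conj[of z M GXm] conj_GX s3 unfolding w_def by simp
  have s5: "w \<bullet> w = real (card S)"
  proof -
    have "z \<bullet> ((transpose M ** mat 1 ** M) *v z) = w \<bullet> (mat 1 *v w)"
      unfolding w_def by (rule qform_conj)
    then have "w \<bullet> w = z \<bullet> z" using MtM by simp
    also have "z \<bullet> z = real (card S)"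
      by (simp add: inner_sum z_e if_distrib sum.If_cases cong: if_cong)
    finally show ?thesis .
  qed
  have s6: "u \<notin> S \<Longrightarrow> w $ u = 0" for u
  proof -
    assume uS: "u \<notin> S"
    then have uX: "u \<notin> X" using XS by blast
    have "w $ u = M $ u $ u * z $ u"
      unfolding w_def mv_entry by (rule sum_single) (use rowY[OF uX] in auto)
    then show ?thesis using uS by (simp add: z_e)
  qed
  have t1: "(\<Sum>u\<in>UNIV. \<Sum>v\<in>UNIV. GXm $ u $ v * (w $ u)^2) = 2 * real (card S)"
  proof -
    have "(\<Sum>u\<in>UNIV. \<Sum>v\<in>UNIV. GXm $ u $ v * (w $ u)^2) = (\<Sum>u\<in>UNIV. (if u \<in> S then 2 else 0) * (w $ u)^2)"
      by (simp add: sum_distrib_right[symmetric] degG)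
    also have "\<dots> = (\<Sum>u\<in>UNIV. 2 * (w $ u * w $ u))"
      by (rule sum.cong) (use s6 in \<open>auto simp: power2_eq_square\<close>)
    also have "\<dots> = 2 * (w \<bullet> w)" by (simp add: inner_sum sum_distrib_left)
    finally show ?thesis using s5 by simp
  qed
  have t2: "(\<Sum>u\<in>UNIV. \<Sum>v\<in>UNIV. GXm $ u $ v * (w $ v)^2) = 2 * real (card S)"
    using t1 by (subst sum.swap) (simp add: symG)
  have t3: "(\<Sum>u\<in>UNIV. \<Sum>v\<in>UNIV. GXm $ u $ v * (w $ u * w $ v)) = 2 * real (card S)"
  proof -
    have "(\<Sum>u\<in>UNIV. \<Sum>v\<in>UNIV. GXm $ u $ v * (w $ u * w $ v)) = w \<bullet> (GXm *v w)"
      by (simp add: inner_sum mv_entry sum_distrib_left mult_ac)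
    then show ?thesis using s4 by simp
  qed
  have s7: "(\<Sum>u\<in>UNIV. \<Sum>v\<in>UNIV. GXm $ u $ v * (w $ u - w $ v)^2) = 0"
  proof -
    have "GXm $ u $ v * (w $ u - w $ v)^2 = GXm $ u $ v * (w $ u)^2 + GXm $ u $ v * (w $ v)^2 - 2 * (GXm $ u $ v * (w $ u * w $ v))" for u v
      by (simp add: power2_eq_square algebra_simps)
    then have "(\<Sum>u\<in>UNIV. \<Sum>v\<in>UNIV. GXm $ u $ v * (w $ u - w $ v)^2)
       = (\<Sum>u\<in>UNIV. \<Sum>v\<in>UNIV. GXm $ u $ v * (w $ u)^2) + (\<Sum>u\<in>UNIV. \<Sum>v\<in>UNIV. GXm $ u $ v * (w $ v)^2)
         - 2 * (\<Sum>u\<in>UNIV. \<Sum>v\<in>UNIV. GXm $ u $ v * (w $ u * w $ v))"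
      by (simp add: sum.distrib sum_subtractf sum_distrib_left)
    then show ?thesis using t1 t2 t3 by simp
  qed
  have nonneg: "0 \<le> GXm $ u $ v * (w $ u - w $ v)^2" for u v by (simp add: adj_entry)
  have s8: "EG u v \<Longrightarrow> w $ u = w $ v" for u v
  proof -
    assume e: "EG u v"
    have inner0: "\<forall>u. (\<Sum>v\<in>UNIV. GXm $ u $ v * (w $ u - w $ v)^2) = 0"
      using s7 by (subst (asm) sum_nonneg_eq_0_iff) (auto intro: sum_nonneg nonneg)
    then have "GXm $ u $ v * (w $ u - w $ v)^2 = 0"
      using sum_nonneg_eq_0_iff[of UNIV "\<lambda>v. GXm $ u $ v * (w $ u - w $ v)^2"] nonneg by auto
    then show ?thesis using e by (simp add: adj_entry)
  qed
  have s9: "GXm *v w = 2 *\<^sub>R w"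
  proof (rule iffD2[OF vec_eq_iff], rule allI)
    fix u
    show "(GXm *v w) $ u = (2 *\<^sub>R w) $ u"
    proof (cases "u \<in> S")
      case True
      then obtain a b where ab: "a \<noteq> b" "{v. EG u v} = {a, b}" using trG unfolding two_reg_def by blast
      have "(GXm *v w) $ u = (\<Sum>v\<in>UNIV. if v \<in> {a, b} then w $ v else 0)"
        unfolding mv_entry by (rule sum.cong) (use ab in \<open>auto simp: adj_entry set_eq_iff\<close>)
      also have "\<dots> = w $ a + w $ b"
      proof -
        have "{v. v = a \<or> v = b} = {a, b}" by blast
        then show ?thesis using ab by (simp add: sum.If_cases)
      qed
      also have "\<dots> = 2 * w $ u" using s8[of u a] s8[of u b] ab by (auto simp: set_eq_iff)
      finally show ?thesis by simp
    next
      case False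
      have "(GXm *v w) $ u = 0" unfolding mv_entry
        by (rule sum.neutral) (use False EG_S in \<open>auto simp: adj_entry\<close>)
      then show ?thesis using s6[OF False] by simp
    qed
  qed
  have s10: "HXm *v z = 2 *\<^sub>R z"
  proof -
    have "HXm *v z = transpose M *v (GXm *v (M *v z))"
      using conj_GX[symmetric] by (simp only: matrix_vector_mul_assoc matrix_mul_assoc)
    also have "\<dots> = transpose M *v (2 *\<^sub>R (M *v z))" using s9 unfolding w_def by simp
    also have "\<dots> = 2 *\<^sub>R ((transpose M ** M) *v z)"
      by (simp only: matrix_vector_mult_scaleR matrix_vector_mul_assoc)
    also have "\<dots> = 2 *\<^sub>R z" using MtM by simp
    finally show ?thesis .
  qed
  have s11: "card {v. EH u v} = 2" if uS: "u \<in> S" for u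
  proof -
    have "(HXm *v z) $ u = (\<Sum>v\<in>UNIV. if EH u v then 1 else 0)"
      unfolding mv_entry by (rule sum.cong) (use EH_S in \<open>auto simp: adj_entry z_e\<close>)
    then have "real (card {v. EH u v}) = 2" using s10 uS by (simp add: sum_if_card z_e)
    then show ?thesis by simp
  qed
  show ?thesis unfolding two_reg_def
    using EH_S EH_sym EH_irr s11 by (metis card_2_iff)
qed

end




lemma Tm_bounds:
  fixes E :: "'v::finite \<Rightarrow> 'v \<Rightarrow> bool"
  assumes "two_reg E S" "v \<in> S"
  shows "0 \<le> Tm k (adj_mat E) $ v $ u" "Tm k (adj_mat E) $ v $ u \<le> 2"
proof -
  obtain a b where ab: "a \<noteq> b" "{u. E v u} = {a, b}" using assms unfolding two_reg_def by blast
  show "0 \<le> Tm k (adj_mat E) $ v $ u" "Tm k (adj_mat E) $ v $ u \<le> 2"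
    using Tm_walk[OF assms(1) ab(2) ab(1), of k u] by auto
qed

lemma cyc_lab_S:
  assumes "two_reg E S" "cyc_lab E n c" shows "c i \<in> S"
proof -
  have "E (c i) (c (i + 1))" using assms(2) unfolding cyc_lab_def by blast
  then show ?thesis using assms(1) unfolding two_reg_def by blast
qed

lemma cyc_lab_inj: "cyc_lab E n c \<Longrightarrow> c i = c j \<longleftrightarrow> i mod int n = j mod int n"
  unfolding cyc_lab_def by blast

lemma cyc_lab_nb: "cyc_lab E n c \<Longrightarrow> {u. E (c i) u} = {c (i + 1), c (i - 1)}"
  unfolding cyc_lab_def by blast

lemma cyc_lab_n: "cyc_lab E n c \<Longrightarrow> n \<ge> 3"
  unfolding cyc_lab_def by blast

context qsw begin

lemma Tm_HG: "Tm k HXm = transpose M ** Tm k GXm ** M"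
  using Tm_conj[OF MtM MMt, of k GXm] conj_GX by simp

lemma T_eq_N:
  assumes trG: "two_reg EG S" and u: "u \<in> S" "u \<notin> X" and v: "v \<in> S" "v \<notin> X"
  shows "Tm k HXm $ u $ v = Tm k GXm $ u $ v"
proof -
  have e: "Tm k HXm $ u $ v = M $ u $ u * Tm k GXm $ u $ v * M $ v $ v"
    using Tm_HG conjYY[OF u(2) v(2)] by simp
  have a: "0 \<le> Tm k GXm $ u $ v" using Tm_bounds[OF trG u(1)] by simp
  have b: "0 \<le> Tm k HXm $ u $ v" using Tm_bounds[OF trH[OF trG] u(1)] by simp
  show ?thesis using M3[OF u(2)] M3[OF v(2)] e a b by auto
qed

lemma labH:
  assumes trG: "two_reg EG S" and cG: "cyc_lab EG n cG" and b: "cG 0 = b"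
    and RC: "\<And>k. Tm k HXm $ b $ b = Tm k GXm $ b $ b"
  shows "\<exists>cH. cyc_lab EH n cH \<and> cH 0 = b"
proof -
  have trh: "two_reg EH S" by (rule trH[OF trG])
  have bS: "b \<in> S" using cyc_lab_S[OF trG cG, of 0] b by simp
  obtain n1 n2 where nn: "n1 \<noteq> n2" "{u. EH b u} = {n1, n2}" using trh bS unfolding two_reg_def by blast
  have n3: "n \<ge> 3" using cyc_lab_n[OF cG] .
  have TG: "Tm k GXm $ b $ b = of_bool (cG (int k) = b) + of_bool (cG (- int k) = b)" for k
    using cyc_lab_Tm[OF trG cG, of k 0 b] b by simp
  have TH: "Tm k HXm $ b $ b = of_bool (walk EH b n1 k = b) + of_bool (walk EH b n2 k = b)" for k
    using Tm_walk[OF trh nn(2) nn(1)] by simp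
  have ret: "walk EH b n1 k \<noteq> b" if "0 < k" "k < n" for k
  proof -
    have "cG (int k) \<noteq> cG 0" "cG (- int k) \<noteq> cG 0"
      using that cyc_lab_inj[OF cG] by (auto simp: zmod_zminus1_eq_if)
    then have "Tm k GXm $ b $ b = 0" using TG b by simp
    then show ?thesis using RC[of k] TH[of k] by (auto simp: of_bool_def split: if_splits)
  qed
  have bk: "walk EH b n1 n = b"
  proof -
    have "cG (int n) = cG 0" "cG (- int n) = cG 0"
      using cyc_lab_inj[OF cG] by auto
    then have "Tm n GXm $ b $ b = 2" using TG b by simp
    then show ?thesis using RC[of n] TH[of n] by (auto simp: of_bool_def split: if_splits)
  qed
  have "EH b n1" using nn by auto
  from walk_cycle[OF trh this n3 ret bk]
  show ?thesis by (intro exI[of _ "\<lambda>i. walk EH b n1 (nat (i mod int n))"]) simp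
qed

end



context qsw begin

lemma orient:
  assumes trG: "two_reg EG S" and cG: "cyc_lab EG n cG" and cH: "cyc_lab EH n cH"
    and b: "cG 0 = b" "cH 0 = b" "b \<notin> X"
  shows "\<exists>cH'. cyc_lab EH n cH' \<and> cH' 0 = b \<and> (\<forall>i. cG i \<notin> X \<longrightarrow> cH' i = cG i)"
proof -
  have trh: "two_reg EH S" by (rule trH[OF trG])
  have n3: "n \<ge> 3" using cyc_lab_n[OF cG] .
  have n0: "int n > 0" using n3 by simp
  have injG: "cG i = cG j \<longleftrightarrow> i mod int n = j mod int n" for i j using cyc_lab_inj[OF cG] .
  have injH: "cH i = cH j \<longleftrightarrow> i mod int n = j mod int n" for i j using cyc_lab_inj[OF cH] .
  have SG: "cG i \<in> S" for i using cyc_lab_S[OF trG cG] .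
  have SH: "cH i \<in> S" for i using cyc_lab_S[OF trh cH] .
  have kmod: "int (nat (x mod int n)) mod int n = x mod int n" for x using n0 by simp
  have P1: "cH a = cG a \<or> cH (- a) = cG a" if "cG a \<notin> X" for a
  proof -
    define k where "k = nat (a mod int n)"
    have kk: "int k mod int n = a mod int n" unfolding k_def by (rule kmod)
    have "Tm k GXm $ cG 0 $ cG a = of_bool (cG (0 + int k) = cG a) + of_bool (cG (0 - int k) = cG a)"
      by (rule cyc_lab_Tm[OF trG cG])
    moreover have "cG (0 + int k) = cG a" using kk injG by simp
    ultimately have g: "Tm k GXm $ b $ cG a \<ge> 1" using b by simp
    have "Tm k HXm $ cH 0 $ cG a = of_bool (cH (0 + int k) = cG a) + of_bool (cH (0 - int k) = cG a)"
      by (rule cyc_lab_Tm[OF trh cH])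
    moreover have "Tm k HXm $ b $ cG a = Tm k GXm $ b $ cG a"
      using T_eq_N[OF trG _ b(3) SG that] SG[of 0] b by simp
    ultimately have "cH (int k) = cG a \<or> cH (- int k) = cG a"
      using g b by (auto simp: of_bool_def split: if_splits)
    moreover have "cH (int k) = cH a" using kk injH by simp
    moreover have "cH (- int k) = cH (- a)" using kk injH by (simp add: zmod_zminus1_eq_if)
    ultimately show ?thesis by simp
  qed
  define sg where "sg a \<longleftrightarrow> cG a \<notin> X \<and> cH a = cG a \<and> cH (- a) \<noteq> cG a" for a
  define sb where "sb a \<longleftrightarrow> cG a \<notin> X \<and> cH (- a) = cG a \<and> cH a \<noteq> cG a" for a
  have nosgsb: "\<not> (sg a1 \<and> sb a2)" for a1 a2
  proof
    assume a: "sg a1 \<and> sb a2"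
    define k where "k = nat ((a2 - a1) mod int n)"
    have kk: "int k mod int n = (a2 - a1) mod int n" unfolding k_def by (rule kmod)
    have y1: "cG a1 \<notin> X" "cH a1 = cG a1" "cH (- a1) \<noteq> cG a1" using a unfolding sg_def by auto
    have y2: "cG a2 \<notin> X" "cH (- a2) = cG a2" "cH a2 \<noteq> cG a2" using a unfolding sb_def by auto
    have "Tm k GXm $ cG a1 $ cG a2 = of_bool (cG (a1 + int k) = cG a2) + of_bool (cG (a1 - int k) = cG a2)"
      by (rule cyc_lab_Tm[OF trG cG])
    moreover have "cG (a1 + int k) = cG a2"
      using kk injG by (metis add.commute diff_add_cancel mod_add_left_eq)
    ultimately have g: "Tm k GXm $ cG a1 $ cG a2 \<ge> 1" by simp
    have "Tm k HXm $ cH a1 $ cG a2 = of_bool (cH (a1 + int k) = cG a2) + of_bool (cH (a1 - int k) = cG a2)"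
      by (rule cyc_lab_Tm[OF trh cH])
    moreover have "Tm k HXm $ cG a1 $ cG a2 = Tm k GXm $ cG a1 $ cG a2"
      by (rule T_eq_N[OF trG SG y1(1) SG y2(1)])
    moreover have "cH (a1 + int k) = cH a2"
      using kk injH by (metis add.commute diff_add_cancel mod_add_left_eq)
    ultimately have "cH (a1 - int k) = cG a2"
      using g y1(2) y2(3) by (auto simp: of_bool_def split: if_splits)
    then have "cH (a1 - int k) = cH (- a2)" using y2(2) by simp
    then have d1: "int n dvd (a1 - int k) - (- a2)" using injH by (simp add: mod_eq_dvd_iff)
    have d2: "int n dvd int k - (a2 - a1)" using kk by (simp add: mod_eq_dvd_iff)
    have "int n dvd a1 - (- a1)"
    proof -
      have "a1 - (- a1) = ((a1 - int k) - (- a2)) + (int k - (a2 - a1))" by simp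
      then show ?thesis using d1 d2 by (metis dvd_add)
    qed
    then have "cH a1 = cH (- a1)" using injH by (simp add: mod_eq_dvd_iff)
    then show False using y1 by simp
  qed
  show ?thesis
  proof (cases "\<exists>a. sb a")
    case False
    have "cH i = cG i" if "cG i \<notin> X" for i
      using P1[OF that] False that unfolding sb_def by blast
    then show ?thesis using cH b by blast
  next
    case True
    then obtain a2 where "sb a2" by blast
    then have nsg: "\<not> sg a" for a using nosgsb by blast
    define cH' where "cH' i = cH (- i)" for i
    have "cyc_lab EH n cH'"
      unfolding cyc_lab_def
    proof (intro conjI allI)
      show "3 \<le> n" by (rule n3)
    next
      fix i j
      show "(cH' i = cH' j) = (i mod int n = j mod int n)"
        unfolding cH'_def injH by (simp add: mod_eq_dvd_iff dvd_diff_commute)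
    next
      fix i
      have "{u. EH (cH (- i)) u} = {cH (- i + 1), cH (- i - 1)}" by (rule cyc_lab_nb[OF cH])
      moreover have "cH (- i + 1) = cH' (i - 1)" unfolding cH'_def by (rule arg_cong[where f=cH]) simp
      moreover have "cH (- i - 1) = cH' (i + 1)" unfolding cH'_def by (rule arg_cong[where f=cH]) simp
      moreover have "cH (- i) = cH' i" unfolding cH'_def by simp
      ultimately show "{u. EH (cH' i) u} = {cH' (i + 1), cH' (i - 1)}"
        by (simp only: insert_commute)
    qed
    moreover have "cH' 0 = b" unfolding cH'_def using b by simp
    moreover have "cH' i = cG i" if "cG i \<notin> X" for i
      using P1[OF that] nsg[of i] that unfolding sg_def cH'_def by auto
    ultimately show ?thesis by blast
  qed
qed

end



locale qsw3 = qsw +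
  fixes P :: "'a set set"
  assumes part: "partition_on (nbhd_vertices G X) P"
    and cycP: "\<And>C. C \<in> P \<Longrightarrow> is_cycle_on C (nbhd_edges G X)"
    and noedge: "\<And>C D x y. C \<in> P \<Longrightarrow> D \<in> P \<Longrightarrow> C \<noteq> D \<Longrightarrow> x \<in> C \<Longrightarrow> y \<in> D \<Longrightarrow> \<not> nbhd_edges G X x y"
    and conn: "connected_graph G"
begin

lemma PS: "C \<in> P \<Longrightarrow> C \<subseteq> S" using partition_onD1[OF part] by blast
lemma Pcov: "v \<in> S \<Longrightarrow> \<exists>C\<in>P. v \<in> C" using partition_onD1[OF part] by blast
lemma Pdisj: "C \<in> P \<Longrightarrow> D \<in> P \<Longrightarrow> C \<noteq> D \<Longrightarrow> C \<inter> D = {}"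
  using partition_onD2[OF part] unfolding disjoint_def by blast
lemma Pne: "C \<in> P \<Longrightarrow> C \<noteq> {}" using partition_onD3[OF part] by blast

lemma closure: assumes "C \<in> P" "u \<in> C" "EG u v" shows "v \<in> C"
proof -
  obtain D where D: "D \<in> P" "v \<in> D" using Pcov EG_S[OF assms(3)] by blast
  show ?thesis using noedge[OF assms(1) D(1) _ assms(2) D(2)] assms(3) D by blast
qed

lemma labG: assumes "C \<in> P" "b \<in> C"
  shows "\<exists>n c. cyc_lab EG n c \<and> c 0 = b \<and> (\<forall>i. c i \<in> C) \<and> (\<forall>v\<in>C. \<exists>i. c i = v)"
  by (rule cycle_lab_exists[OF cycP[OF assms(1)] _ assms(2)]) (use closure assms(1) in blast)

lemma trG: "two_reg EG S"
  unfolding two_reg_def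
proof (intro conjI allI impI ballI)
  fix u assume "u \<in> S"
  then obtain C where C: "C \<in> P" "u \<in> C" using Pcov by blast
  obtain n c where c: "cyc_lab EG n c" "c 0 = u" using labG[OF C] by blast
  show "\<exists>a b. a \<noteq> b \<and> {v. EG u v} = {a, b}"
    using cyc_lab_nb[OF c(1), of 0] cyc_lab_distinct[OF c(1), of 0] c(2) by auto
qed (use EG_S EG_sym EG_irr in auto)

lemma assemble:
  fixes nn :: "'a set \<Rightarrow> nat" and cg ch :: "'a set \<Rightarrow> int \<Rightarrow> 'a"
  assumes A: "\<And>C. C \<in> P \<Longrightarrow> cyc_lab EG (nn C) (cg C) \<and> cyc_lab EH (nn C) (ch C) \<and> (\<forall>i. cg C i \<in> C)
      \<and> (\<forall>v\<in>C. \<exists>i. cg C i = v) \<and> (\<forall>i. cg C i \<notin> X \<longrightarrow> ch C i = cg C i)"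
    and D: "\<And>C D i j. C \<in> P \<Longrightarrow> D \<in> P \<Longrightarrow> C \<noteq> D \<Longrightarrow> ch C i \<noteq> ch D j"
  shows "graph_iso G H"
proof -
  have trh: "two_reg EH S" by (rule trH[OF trG])
  define comp where "comp v = (THE C. C \<in> P \<and> v \<in> C)" for v
  have comp: "comp v = C" if "C \<in> P" "v \<in> C" for C v
    unfolding comp_def by (rule the_equality) (use that Pdisj in blast)+
  define pos where "pos v = (SOME i. cg (comp v) i = v)" for v
  define f where "f v = (if v \<in> S then ch (comp v) (pos v) else v)" for v
  have fcg: "f (cg C i) = ch C i" if C: "C \<in> P" for C i
  proof -
    have inC: "cg C i \<in> C" using A[OF C] by blast
    then have inS: "cg C i \<in> S" using PS[OF C] by blast
    have cp: "comp (cg C i) = C" by (rule comp[OF C inC])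
    have "cg C (pos (cg C i)) = cg C i" unfolding pos_def cp by (rule someI[of _ i]) simp
    then have "pos (cg C i) mod int (nn C) = i mod int (nn C)"
      using cyc_lab_inj[of EG "nn C" "cg C"] A[OF C] by blast
    then have "ch C (pos (cg C i)) = ch C i"
      using cyc_lab_inj[of EH "nn C" "ch C"] A[OF C] by blast
    then show ?thesis unfolding f_def using inS cp by simp
  qed
  have Sdec: "\<exists>C\<in>P. \<exists>i. v = cg C i" if "v \<in> S" for v
    using Pcov[OF that] A by metis
  have chS: "C \<in> P \<Longrightarrow> ch C i \<in> S" for C i using cyc_lab_S[OF trh] A by blast
  have fS: "v \<in> S \<Longrightarrow> f v \<in> S" for v using Sdec fcg chS by metis
  have fout: "v \<notin> S \<Longrightarrow> f v = v" for v unfolding f_def by simp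
  have injf: "inj f"
  proof (rule injI)
    fix u v assume e: "f u = f v"
    show "u = v"
    proof (cases "u \<in> S")
      case uS: True
      show ?thesis
      proof (cases "v \<in> S")
        case vS: True
        obtain C i where Ci: "C \<in> P" "u = cg C i" using Sdec[OF uS] by blast
        obtain D j where Dj: "D \<in> P" "v = cg D j" using Sdec[OF vS] by blast
        have "ch C i = ch D j" using e Ci Dj fcg by simp
        then have CD: "C = D" using D Ci Dj by blast
        then have "i mod int (nn C) = j mod int (nn C)"
          using \<open>ch C i = ch D j\<close> cyc_lab_inj[of EH "nn C" "ch C"] A[OF Ci(1)] by blast
        then show ?thesis using Ci Dj CD cyc_lab_inj[of EG "nn C" "cg C"] A[OF Ci(1)] by blast
      next
        case False
        then show ?thesis using e fS[OF uS] fout by auto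
      qed
    next
      case False
      then show ?thesis using e fS fout by (cases "v \<in> S") auto
    qed
  qed
  have bijf: "bij f" using injf finite_UNIV_inj_surj[of f] by (simp add: bij_def)
  have fY: "f v = v" if "v \<notin> X" for v
  proof (cases "v \<in> S")
    case True
    obtain C i where Ci: "C \<in> P" "v = cg C i" using Sdec[OF True] by blast
    then show ?thesis using fcg[OF Ci(1)] A[OF Ci(1)] that by auto
  qed (use fout in auto)
  have fX: "f v \<in> X" if "v \<in> X" for v
  proof (rule ccontr)
    assume "f v \<notin> X"
    then have "f (f v) = f v" by (rule fY)
    then have "f v = v" using injf by (meson injD)
    then show False using that \<open>f v \<notin> X\<close> by simp
  qed
  have fE: "EG u v \<longleftrightarrow> EH (f u) (f v)" for u v
  proof (cases "u \<in> S")
    case True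
    obtain C i where Ci: "C \<in> P" "u = cg C i" using Sdec[OF True] by blast
    have g: "EG u v \<longleftrightarrow> v = cg C (i + 1) \<or> v = cg C (i - 1)"
      using cyc_lab_nb[of EG "nn C" "cg C" i] A[OF Ci(1)] Ci(2) by auto
    have h: "EH (f u) w \<longleftrightarrow> w = ch C (i + 1) \<or> w = ch C (i - 1)" for w
      using cyc_lab_nb[of EH "nn C" "ch C" i] A[OF Ci(1)] Ci(2) fcg[OF Ci(1)] by auto
    have "f v = ch C (i + 1) \<longleftrightarrow> v = cg C (i + 1)" "f v = ch C (i - 1) \<longleftrightarrow> v = cg C (i - 1)"
      using fcg[OF Ci(1)] injf by (metis injD)+
    then show ?thesis using g h by blast
  next
    case False
    then show ?thesis using EG_S EH_S fout by metis
  qed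
  have "G u v \<longleftrightarrow> H (f u) (f v)" for u v
  proof (cases "u \<in> X \<or> v \<in> X")
    case True
    then have "f u \<in> X \<or> f v \<in> X" using fX by blast
    then show ?thesis using fE[of u v] True unfolding nbhd_edges_def by blast
  next
    case False
    then show ?thesis using fY HYY by auto
  qed
  then show ?thesis unfolding graph_iso_def using bijf by blast
qed

end



context qsw3 begin

lemma caseB:
  assumes nX: "\<forall>C\<in>P. \<not> C \<subseteq> X"
  shows "graph_iso G H"
proof -
  have trh: "two_reg EH S" by (rule trH[OF trG])
  define Pr where "Pr C t \<longleftrightarrow> cyc_lab EG (fst t) (fst (snd t)) \<and> cyc_lab EH (fst t) (snd (snd t))
      \<and> (\<forall>i. fst (snd t) i \<in> C) \<and> (\<forall>v\<in>C. \<exists>i. fst (snd t) i = v)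
      \<and> (\<forall>i. fst (snd t) i \<notin> X \<longrightarrow> snd (snd t) i = fst (snd t) i)
      \<and> fst (snd t) 0 \<notin> X \<and> snd (snd t) 0 = fst (snd t) 0" for C and t :: "nat \<times> (int \<Rightarrow> 'a) \<times> (int \<Rightarrow> 'a)"
  have ex: "\<forall>C\<in>P. \<exists>t. Pr C t"
  proof
    fix C assume C: "C \<in> P"
    obtain b where b: "b \<in> C" "b \<notin> X" using nX C by blast
    obtain n cg where cg: "cyc_lab EG n cg" "cg 0 = b" "\<forall>i. cg i \<in> C" "\<forall>v\<in>C. \<exists>i. cg i = v"
      using labG[OF C b(1)] by blast
    have bS: "b \<in> S" using PS[OF C] b by blast
    have RC: "Tm k HXm $ b $ b = Tm k GXm $ b $ b" for k by (rule T_eq_N[OF trG bS b(2) bS b(2)])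
    obtain cH where cH: "cyc_lab EH n cH" "cH 0 = b" using labH[OF trG cg(1) cg(2) RC] by blast
    obtain cH' where cH': "cyc_lab EH n cH'" "cH' 0 = b" "\<forall>i. cg i \<notin> X \<longrightarrow> cH' i = cg i"
      using orient[OF trG cg(1) cH(1) cg(2) cH(2) b(2)] by blast
    show "\<exists>t. Pr C t" unfolding Pr_def
      by (rule exI[of _ "(n, cg, cH')"]) (use cg cH' b in simp)
  qed
  then obtain F where F: "\<forall>C\<in>P. Pr C (F C)" by (metis bchoice)
  define nn where "nn C = fst (F C)" for C
  define cg where "cg C = fst (snd (F C))" for C
  define ch where "ch C = snd (snd (F C))" for C
  have A: "cyc_lab EG (nn C) (cg C) \<and> cyc_lab EH (nn C) (ch C) \<and> (\<forall>i. cg C i \<in> C)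
      \<and> (\<forall>v\<in>C. \<exists>i. cg C i = v) \<and> (\<forall>i. cg C i \<notin> X \<longrightarrow> ch C i = cg C i)
      \<and> cg C 0 \<notin> X \<and> ch C 0 = cg C 0" if "C \<in> P" for C
    using F that unfolding Pr_def nn_def cg_def ch_def by blast
  have D: "ch C i \<noteq> ch D j" if CD: "C \<in> P" "D \<in> P" "C \<noteq> D" for C D i j
  proof
    assume e: "ch C i = ch D j"
    have AC: "cyc_lab EH (nn C) (ch C)" "cyc_lab EG (nn C) (cg C)" using A[OF CD(1)] by blast+
    have AD: "cyc_lab EH (nn D) (ch D)" using A[OF CD(2)] by blast
    have closedR: "w \<in> range (ch C)" if xr: "x \<in> range (ch C)" and eh: "EH x w" for x w
    proof -
      obtain i' where "x = ch C i'" using xr by blast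
      then have "w = ch C (i' + 1) \<or> w = ch C (i' - 1)" using cyc_lab_nb[OF AC(1), of i'] eh by auto
      then show ?thesis by blast
    qed
    have bck: "ch D (j - int t) \<in> range (ch C)" for t
    proof (induction t)
      case 0 then show ?case using e by (metis diff_zero of_nat_0 rangeI)
    next
      case (Suc t)
      have "EH (ch D (j - int t)) (ch D (j - int t - 1))" using cyc_lab_nb[OF AD, of "j - int t"] by auto
      then show ?case using closedR[OF Suc] by (simp add: algebra_simps)
    qed
    have n0: "int (nn D) > 0" using cyc_lab_n[OF AD] by simp
    have "j - int (nat (j mod int (nn D))) = int (nn D) * (j div int (nn D))"
      using n0 by (simp add: minus_mod_eq_mult_div)
    then have "(j - int (nat (j mod int (nn D)))) mod int (nn D) = 0 mod int (nn D)" by simp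
    then have "ch D 0 = ch D (j - int (nat (j mod int (nn D))))"
      using cyc_lab_inj[OF AD] by metis
    then have "ch D 0 \<in> range (ch C)" using bck by metis
    then obtain i' where i': "ch C i' = ch D 0" by auto
    have nC0: "int (nn C) > 0" using cyc_lab_n[OF AC(1)] by simp
    define k where "k = nat (i' mod int (nn C))"
    have "ch C (0 + int k) = ch C i'" using cyc_lab_inj[OF AC(1)] nC0 unfolding k_def by simp
    then have h1: "Tm k HXm $ ch C 0 $ ch D 0 \<ge> 1" using cyc_lab_Tm[OF trh AC(1), of k 0 "ch D 0"] i' by simp
    have c0: "cg C 0 \<in> S" "cg C 0 \<notin> X" "cg D 0 \<in> S" "cg D 0 \<notin> X" "ch C 0 = cg C 0" "ch D 0 = cg D 0"
      using A[OF CD(1)] A[OF CD(2)] PS[OF CD(1)] PS[OF CD(2)] by blast+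
    have "Tm k GXm $ cg C 0 $ cg D 0 \<ge> 1" using h1 T_eq_N[OF trG c0(1,2,3,4)] c0(5,6) by simp
    then have "cg C (0 + int k) = cg D 0 \<or> cg C (0 - int k) = cg D 0"
      using cyc_lab_Tm[OF trG AC(2), of k 0 "cg D 0"] by (auto simp: of_bool_def split: if_splits)
    then have "cg D 0 \<in> C" using A[OF CD(1)] by metis
    moreover have "cg D 0 \<in> D" using A[OF CD(2)] by blast
    ultimately show False using Pdisj[OF CD] by blast
  qed
  show ?thesis
  proof (rule assemble[of nn cg ch])
    fix C assume C: "C \<in> P"
    show "cyc_lab EG (nn C) (cg C) \<and> cyc_lab EH (nn C) (ch C) \<and> (\<forall>i. cg C i \<in> C)
      \<and> (\<forall>v\<in>C. \<exists>i. cg C i = v) \<and> (\<forall>i. cg C i \<notin> X \<longrightarrow> ch C i = cg C i)"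
      using A[OF C] by (elim conjE) (intro conjI; assumption)
  next
    fix C E i j assume "C \<in> P" "E \<in> P" "C \<noteq> E"
    then show "ch C i \<noteq> ch E j" by (rule D)
  qed
qed

lemma caseA:
  assumes C: "C \<in> P" and CX: "C \<subseteq> X"
  shows "graph_iso G H"
proof -
  have trh: "two_reg EH S" by (rule trH[OF trG])
  obtain c0 where c0: "c0 \<in> C" using Pne[OF C] by blast
  have allC: "v \<in> C" for v
  proof -
    have "(c0, v) \<in> {(x, y). G x y}\<^sup>*" using conn unfolding connected_graph_def by blast
    then show ?thesis
    proof (induction rule: rtrancl_induct)
      case base then show ?case by (rule c0)
    next
      case (step y z)
      then have "EG y z" using CX unfolding nbhd_edges_def by blast
      then show ?case using closure[OF C step.IH] by blast
    qed
  qed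
  have PC: "D \<in> P \<Longrightarrow> D = C" for D using Pdisj[OF _ C] Pne allC by blast
  have SU: "v \<in> S" for v using allC PS[OF C] by blast
  obtain n cg where cg: "cyc_lab EG n cg" "cg 0 = c0" "\<forall>i. cg i \<in> C" "\<forall>v\<in>C. \<exists>i. cg i = v"
    using labG[OF C c0] by blast
  have n0: "int n > 0" using cyc_lab_n[OF cg(1)] by simp
  have TGd: "Tm k GXm $ v $ v = (if int n dvd int k then 2 else 0)" for k v
  proof -
    obtain a where a: "cg a = v" using cg(4) allC by blast
    have "Tm k GXm $ cg a $ cg a = of_bool (cg (a + int k) = cg a) + of_bool (cg (a - int k) = cg a)"
      by (rule cyc_lab_Tm[OF trG cg(1)])
    moreover have "cg (a + int k) = cg a \<longleftrightarrow> int n dvd int k"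
      using cyc_lab_inj[OF cg(1)] by (simp add: mod_eq_dvd_iff)
    moreover have "cg (a - int k) = cg a \<longleftrightarrow> int n dvd int k"
      using cyc_lab_inj[OF cg(1)] by (simp add: mod_eq_dvd_iff)
    ultimately show ?thesis using a by simp
  qed
  have trace_eq: "trace (Tm k HXm) = trace (Tm k GXm)" for k
  proof -
    have "trace (Tm k HXm) = trace (M ** (transpose M ** Tm k GXm))"
      unfolding Tm_HG by (rule trace_mul_sym)
    also have "\<dots> = trace (Tm k GXm)" using MMt by (simp add: matrix_mul_assoc)
    finally show ?thesis .
  qed
  have RC: "Tm k HXm $ c0 $ c0 = Tm k GXm $ c0 $ c0" for k
  proof -
    have bnd: "0 \<le> Tm k HXm $ v $ v" "Tm k HXm $ v $ v \<le> 2" for v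
      using Tm_bounds[OF trh SU] by auto
    have tr0: "(\<Sum>v\<in>UNIV. Tm k HXm $ v $ v) = (\<Sum>v\<in>UNIV. Tm k GXm $ v $ v)"
      using trace_eq[of k] unfolding trace_def .
    have tr: "(\<Sum>v\<in>UNIV. Tm k HXm $ v $ v) = (\<Sum>v\<in>(UNIV::'a set). (if int n dvd int k then 2 else (0::real)))"
      unfolding tr0 by (rule sum.cong) (simp_all add: TGd)
    show ?thesis
    proof (cases "int n dvd int k")
      case True
      have "(\<Sum>v\<in>UNIV. 2 - Tm k HXm $ v $ v) = 0"
        using tr True by (simp add: sum_subtractf)
      then have "\<forall>v. 2 - Tm k HXm $ v $ v = 0"
        using sum_nonneg_eq_0_iff[of UNIV "\<lambda>v. 2 - Tm k HXm $ v $ v"] bnd by auto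
      then show ?thesis using True TGd by simp
    next
      case False
      have "(\<Sum>v\<in>UNIV. Tm k HXm $ v $ v) = 0" using tr False by simp
      then have "\<forall>v. Tm k HXm $ v $ v = 0"
        using sum_nonneg_eq_0_iff[of UNIV "\<lambda>v. Tm k HXm $ v $ v"] bnd by auto
      then show ?thesis using False TGd by simp
    qed
  qed
  obtain cH where cH: "cyc_lab EH n cH" "cH 0 = c0" using labH[OF trG cg(1) cg(2) RC] by blast
  show ?thesis
  proof (rule assemble[of "\<lambda>_. n" "\<lambda>_. cg" "\<lambda>_. cH"])
    fix D assume "D \<in> P"
    then have "D = C" by (rule PC)
    then show "cyc_lab EG n cg \<and> cyc_lab EH n cH \<and> (\<forall>i. cg i \<in> D) \<and> (\<forall>v\<in>D. \<exists>i. cg i = v)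
       \<and> (\<forall>i. cg i \<notin> X \<longrightarrow> cH i = cg i)"
      using cg cH CX by blast
  next
    fix D E i j assume "D \<in> P" "E \<in> P" "D \<noteq> E"
    then show "cH i \<noteq> cH j" using PC by blast
  qed
qed

lemma iso: "graph_iso G H"
proof (cases "\<exists>C\<in>P. C \<subseteq> X")
  case True
  then obtain C where "C \<in> P" "C \<subseteq> X" by blast
  then show ?thesis by (rule caseA)
next
  case False
  then have "\<forall>C\<in>P. \<not> C \<subseteq> X" by simp
  then show ?thesis by (rule caseB)
qed

end

theorem lemma3p10:
  fixes G H :: "'v::finite \<Rightarrow> 'v \<Rightarrow> bool" and X :: "'v set"
  assumes "simple_graph G" and "connected_graph G"
    and "q_switching G X H"
    and "disjoint_union_of_cycles (nbhd_vertices G X) (nbhd_edges G X)"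
  shows "graph_iso G H"
proof -
  have q: "simple_graph G \<and> simple_graph H \<and>
     (\<exists>M :: real^'v^'v.
        (\<forall>i j. (i \<in> X \<and> j \<notin> X) \<or> (i \<notin> X \<and> j \<in> X) \<longrightarrow> M $ i $ j = 0) \<and>
        (\<forall>i j. i \<notin> X \<and> j \<notin> X \<and> i \<noteq> j \<longrightarrow> M $ i $ j = 0) \<and>
        (\<forall>i. i \<notin> X \<longrightarrow> M $ i $ i = 1 \<or> M $ i $ i = -1) \<and>
        (\<forall>i\<in>X. \<forall>j\<in>X. (\<Sum>k\<in>X. M $ k $ i * M $ k $ j) = (if i = j then 1 else 0)) \<and>
        (\<forall>i\<in>X. \<exists>j\<in>X. M $ i $ j \<notin> \<int>) \<and>
        adj_mat H = transpose M ** adj_mat G ** M)"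
    using assms(3) unfolding q_switching_def .
  obtain M :: "real^'v^'v" where
    M1: "\<forall>i j. (i \<in> X \<and> j \<notin> X) \<or> (i \<notin> X \<and> j \<in> X) \<longrightarrow> M $ i $ j = 0"
    and M2: "\<forall>i j. i \<notin> X \<and> j \<notin> X \<and> i \<noteq> j \<longrightarrow> M $ i $ j = 0"
    and M3: "\<forall>i. i \<notin> X \<longrightarrow> M $ i $ i = 1 \<or> M $ i $ i = -1"
    and M4: "\<forall>i\<in>X. \<forall>j\<in>X. (\<Sum>k\<in>X. M $ k $ i * M $ k $ j) = (if i = j then 1 else 0)"
    and M5: "\<forall>i\<in>X. \<exists>j\<in>X. M $ i $ j \<notin> \<int>"
    and AH: "adj_mat H = transpose M ** adj_mat G ** M"
    using q by (elim conjE exE) (rule that; assumption)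
  have sH: "simple_graph H" using q by (elim conjE)
  have dq: "\<exists>P. partition_on (nbhd_vertices G X) P \<and>
     (\<forall>C\<in>P. is_cycle_on C (nbhd_edges G X)) \<and>
     (\<forall>C\<in>P. \<forall>D\<in>P. C \<noteq> D \<longrightarrow> (\<forall>x\<in>C. \<forall>y\<in>D. \<not> nbhd_edges G X x y))"
    using assms(4) unfolding disjoint_union_of_cycles_def .
  obtain P where part: "partition_on (nbhd_vertices G X) P"
    and cyc: "\<forall>C\<in>P. is_cycle_on C (nbhd_edges G X)"
    and ne: "\<forall>C\<in>P. \<forall>D\<in>P. C \<noteq> D \<longrightarrow> (\<forall>x\<in>C. \<forall>y\<in>D. \<not> nbhd_edges G X x y)"
    using dq by (elim conjE exE) (rule that; assumption)
  interpret q: qsw3 G H X M P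
  proof unfold_locales
    show "simple_graph G" by (rule assms(1))
    show "simple_graph H" by (rule sH)
    show "M $ i $ j = 0" if "i \<in> X \<and> j \<notin> X \<or> i \<notin> X \<and> j \<in> X" for i j using M1 that by blast
    show "M $ i $ j = 0" if "i \<notin> X" "j \<notin> X" "i \<noteq> j" for i j using M2 that by simp
    show "M $ i $ i = 1 \<or> M $ i $ i = -1" if "i \<notin> X" for i using M3 that by simp
    show "(\<Sum>k\<in>X. M $ k $ i * M $ k $ j) = (if i = j then 1 else 0)" if "i \<in> X" "j \<in> X" for i j
      using M4 that by simp
    show "adj_mat H = transpose M ** adj_mat G ** M" by (rule AH)
    show "partition_on (nbhd_vertices G X) P" by (rule part)
    show "is_cycle_on C (nbhd_edges G X)" if "C \<in> P" for C using cyc that by simp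
    show "\<not> nbhd_edges G X x y" if "C \<in> P" "D \<in> P" "C \<noteq> D" "x \<in> C" "y \<in> D" for C D x y
      using ne that by metis
    show "connected_graph G" by (rule assms(2))
  qed
  show ?thesis by (rule q.iso)
qed



end
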